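(* Let $A$ be a hyperoperator on $\mathbb{R}^n$ on the complex Banach space $X$ and let $(\chi_N)$ be an exhausting sequence in $\mathbb{R}^n$. Then $\bigcup_N \operatorname{Im} A(\chi_N)=D_A$, where $D_A=\bigcup_{\phi\in\mathcal{D}(\mathbb{R}^n)}\operatorname{Im}A(\phi)$.
   Context: $X$ is a complex Banach space, $L(X)$ the bounded operators on $X$, $e_X$ the identity. $\mathcal{D}(\mathbb{R}^n)=C_c^\infty(\mathbb{R}^n)$ (complex-valued) with its usual topology. A linear map $A:\mathcal{D}(\mathbb{R}^n)\to L(X)$ is continuous if $A(\phi_j)\to 0$ in operator norm whenever $\phi_j\to0$ in $\mathcal{D}(\mathbb{R}^n)$, and multiplicative if $A(\phi\psi)=A(\phi)A(\psi)$. A hyperoperator on $\mathbb{R}^n$ is a continuous linear multiplicative map $A:\mathcal{D}(\mathbb{R}^n)\to L(X)$ such that (i) $D_A:=\bigcup_{\phi}\operatorname{Im}A(\phi)$ is dense in $X$ and (ii) $\bigcap_\phi\operatorname{Ker}A(\phi)=\{0\}$. A sequence $\chi_N\in\mathcal{D}(\mathbb{R}^n)$ is exhausting if $0\le\chi_N\le1$, $\chi_N\nearrow 1$, and the compact sets $K_N=\{\chi_N=1\}$ satisfy $K_N\subset\operatorname{int}K_{N+1}$ and $\bigcup_N K_N=\mathbb{R}^n$. *)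

theory Defs
  imports "HOL-Analysis.Analysis"
begin

text \<open>A complex Banach space is rendered
as a real Banach space type together with a complex scalar multiplication
extending the real one and compatible with the norm.\<close>

definition complex_banach :: "(complex \<Rightarrow> 'x::banach \<Rightarrow> 'x) \<Rightarrow> bool" where
  "complex_banach sm \<longleftrightarrow>
     (\<forall>r x. sm (complex_of_real r) x = r *\<^sub>R x) \<and>
     (\<forall>a b x. sm (a * b) x = sm a (sm b x)) \<and>
     (\<forall>a b x. sm (a + b) x = sm a x + sm b x) \<and>
     (\<forall>a x y. sm a (x + y) = sm a x + sm a y) \<and>
     (\<forall>a x. norm (sm a x) = cmod a * norm x)"

definition bounded_op :: "(complex \<Rightarrow> 'x::banach \<Rightarrow> 'x) \<Rightarrow> ('x \<Rightarrow> 'x) \<Rightarrow> bool" where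
  "bounded_op sm T \<longleftrightarrow> bounded_linear T \<and> (\<forall>c x. T (sm c x) = sm c (T x))"

definition partial_deriv :: "'n::finite \<Rightarrow> (real^'n \<Rightarrow> complex) \<Rightarrow> real^'n \<Rightarrow> complex" where
  "partial_deriv i f x = frechet_derivative f (at x) (axis i 1)"

fun iter_pd :: "'n::finite list \<Rightarrow> (real^'n \<Rightarrow> complex) \<Rightarrow> real^'n \<Rightarrow> complex" where
  "iter_pd [] f = f"
| "iter_pd (i # is) f = partial_deriv i (iter_pd is f)"

definition smooth_fun :: "(real^'n::finite \<Rightarrow> complex) \<Rightarrow> bool" where
  "smooth_fun f \<longleftrightarrow> (\<forall>is x. iter_pd is f differentiable (at x))"

definition tsupp :: "(real^'n::finite \<Rightarrow> complex) \<Rightarrow> (real^'n) set" where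
  "tsupp f = closure {x. f x \<noteq> 0}"

definition test_fun :: "(real^'n::finite \<Rightarrow> complex) \<Rightarrow> bool" where
  "test_fun f \<longleftrightarrow> smooth_fun f \<and> compact (tsupp f)"

definition D_tendsto_zero :: "(nat \<Rightarrow> real^'n::finite \<Rightarrow> complex) \<Rightarrow> bool" where
  "D_tendsto_zero \<phi> \<longleftrightarrow> (\<forall>j. test_fun (\<phi> j)) \<and>
     (\<exists>K. compact K \<and> (\<forall>j. tsupp (\<phi> j) \<subseteq> K)) \<and>
     (\<forall>is e. e > 0 \<longrightarrow> (\<forall>\<^sub>F j in sequentially. \<forall>x. cmod (iter_pd is (\<phi> j) x) < e))"

definition hyperoperator ::
  "(complex \<Rightarrow> 'x::banach \<Rightarrow> 'x) \<Rightarrow> ((real^'n::finite \<Rightarrow> complex) \<Rightarrow> 'x \<Rightarrow> 'x) \<Rightarrow> bool" where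
  "hyperoperator sm A \<longleftrightarrow>
     (\<forall>\<phi>. test_fun \<phi> \<longrightarrow> bounded_op sm (A \<phi>)) \<and>
     (\<forall>\<phi> \<psi>. test_fun \<phi> \<longrightarrow> test_fun \<psi> \<longrightarrow> A (\<lambda>x. \<phi> x + \<psi> x) = (\<lambda>v. A \<phi> v + A \<psi> v)) \<and>
     (\<forall>c \<phi>. test_fun \<phi> \<longrightarrow> A (\<lambda>x. c * \<phi> x) = (\<lambda>v. sm c (A \<phi> v))) \<and>
     (\<forall>\<phi> \<psi>. test_fun \<phi> \<longrightarrow> test_fun \<psi> \<longrightarrow> A (\<lambda>x. \<phi> x * \<psi> x) = A \<phi> \<circ> A \<psi>) \<and>
     (\<forall>\<phi>s. D_tendsto_zero \<phi>s \<longrightarrow> (\<lambda>j. onorm (A (\<phi>s j))) \<longlonglongrightarrow> 0) \<and>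
     closure (\<Union>{range (A \<phi>) | \<phi>. test_fun \<phi>}) = UNIV \<and>
     (\<Inter>{{v. A \<phi> v = 0} | \<phi>. test_fun \<phi>}) = {0}"

definition D_A :: "((real^'n::finite \<Rightarrow> complex) \<Rightarrow> 'x \<Rightarrow> 'x) \<Rightarrow> 'x set" where
  "D_A A = \<Union>{range (A \<phi>) | \<phi>. test_fun \<phi>}"

definition exhausting :: "(nat \<Rightarrow> real^'n::finite \<Rightarrow> complex) \<Rightarrow> bool" where
  "exhausting chi \<longleftrightarrow>
     (\<forall>N. test_fun (chi N)) \<and>
     (\<forall>N x. chi N x \<in> complex_of_real ` {0..1}) \<and>
     (\<forall>N x. Re (chi N x) \<le> Re (chi (Suc N) x)) \<and>
     (\<forall>x. (\<lambda>N. chi N x) \<longlonglongrightarrow> 1) \<and>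
     (\<forall>N. compact {x. chi N x = 1}) \<and>
     (\<forall>N. {x. chi N x = 1} \<subseteq> interior {x. chi (Suc N) x = 1}) \<and>
     (\<Union>N. {x. chi N x = 1}) = UNIV"

end

theory Submission
  imports Defs
begin

theorem lemma3p1:
  fixes sm :: "complex \<Rightarrow> 'x::banach \<Rightarrow> 'x"
    and A :: "(real^'n::finite \<Rightarrow> complex) \<Rightarrow> 'x \<Rightarrow> 'x"
    and chi :: "nat \<Rightarrow> real^'n \<Rightarrow> complex"
  assumes "complex_banach sm"
    and "hyperoperator sm A"
    and "exhausting chi"
  shows "(\<Union>N. range (A (chi N))) = D_A A"
proof
  have E1: "(\<forall>N. test_fun (chi N))"
    using assms(3) unfolding exhausting_def by (elim conjE) assumption
  have E2: "(\<forall>N. {x. chi N x = 1} \<subseteq> interior {x. chi (Suc N) x = 1})"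
    using assms(3) unfolding exhausting_def by (elim conjE) assumption
  have E3: "(\<Union>N. {x. chi N x = 1}) = UNIV"
    using assms(3) unfolding exhausting_def by (elim conjE) assumption
  have tf: "\<And>N. test_fun (chi N)" using E1 by blast
  show "(\<Union>N. range (A (chi N))) \<subseteq> D_A A"
    unfolding D_A_def using tf by blast
  define K where "K N = {x. chi N x = 1}" for N
  have Ksub: "K N \<subseteq> interior (K (Suc N))" for N
    using E2 unfolding K_def by blast
  have Kun: "(\<Union>N. K N) = UNIV" using E3 unfolding K_def by blast
  have Kst: "K N \<subseteq> K (Suc N)" for N using Ksub[of N] interior_subset by blast
  have Kmono: "m \<le> M \<Longrightarrow> K m \<subseteq> K M" for m M
    using lift_Suc_mono_le[of K, OF Kst] by blast
  have mult: "\<And>\<phi> \<psi>. test_fun \<phi> \<Longrightarrow> test_fun \<psi> \<Longrightarrow> A (\<lambda>x. \<phi> x * \<psi> x) = A \<phi> \<circ> A \<psi>"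
    using assms(2) unfolding hyperoperator_def by (elim conjE) blast
  show "D_A A \<subseteq> (\<Union>N. range (A (chi N)))"
  proof
    fix v assume "v \<in> D_A A"
    then obtain \<phi> w where tp: "test_fun \<phi>" and v: "v = A \<phi> w" unfolding D_A_def by blast
    have cpt: "compact (tsupp \<phi>)" using tp unfolding test_fun_def by blast
    have cov: "tsupp \<phi> \<subseteq> (\<Union>N\<in>UNIV. interior (K (Suc N)))"
    proof
      fix x assume "x \<in> tsupp \<phi>"
      have "x \<in> (\<Union>N. K N)" using Kun by simp
      then obtain N where "x \<in> K N" by blast
      then have "x \<in> interior (K (Suc N))" using Ksub by blast
      then show "x \<in> (\<Union>N\<in>UNIV. interior (K (Suc N)))" by blast
    qed
    obtain G where G: "finite G" "tsupp \<phi> \<subseteq> (\<Union>N\<in>G. interior (K (Suc N)))"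
      apply (rule compactE_image[OF cpt _ cov])
       apply (rule open_interior)
      apply (erule that[rotated])
      apply assumption
      done
    define M where "M = Suc (Max (insert 0 G))"
    have "tsupp \<phi> \<subseteq> K M"
    proof
      fix x assume "x \<in> tsupp \<phi>"
      then obtain m where m: "m \<in> G" "x \<in> interior (K (Suc m))" using G(2) by blast
      have "Suc m \<le> M" unfolding M_def using G(1) m(1) by simp
      then show "x \<in> K M" using Kmono[of "Suc m" M] m(2) interior_subset by blast
    qed
    then have s: "tsupp \<phi> \<subseteq> K M" .
    have eq: "(\<lambda>x. chi M x * \<phi> x) = \<phi>"
      proof
        fix x show "chi M x * \<phi> x = \<phi> x"
        proof (cases "\<phi> x = 0")
          case False
          then have "x \<in> {x. \<phi> x \<noteq> 0}" by simp
          then have "x \<in> tsupp \<phi>" unfolding tsupp_def by (rule subsetD[OF closure_subset])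
          then have "x \<in> K M" using s by (rule rev_subsetD)
          then have "chi M x = 1" by (simp add: K_def)
          then show ?thesis by simp
        qed simp
      qed
    have "A \<phi> = A (chi M) \<circ> A \<phi>" using mult[OF tf[of M] tp] unfolding eq .
    then have "A \<phi> w = (A (chi M) \<circ> A \<phi>) w" by (rule fun_cong)
    then have "v = A (chi M) (A \<phi> w)" unfolding v by (simp only: comp_apply)
    then have "v \<in> range (A (chi M))" by (rule range_eqI)
    then show "v \<in> (\<Union>N. range (A (chi N)))" by (rule UN_I[OF UNIV_I])
  qed
qed

end
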